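(* Let $\mathcal F$ be a Grothendieck topology on a finite monoid $M$. Then there is a two-sided ideal $\mathfrak m$ of $M$ with $\mathfrak m^2=\mathfrak m$ such that $\mathcal F=\mathcal F_{\mathfrak m}:=\{\mathfrak a \text{ right ideal}\mid \mathfrak m\subseteq\mathfrak a\}$.
   Context: Right ideals may be empty. $\mathfrak m^2=\{xy\mid x,y\in\mathfrak m\}$. For a right ideal $\mathfrak a$ and $m\in M$, $(\mathfrak a:m)=\{x\in M\mid mx\in\mathfrak a\}$. A Grothendieck topology on $M$ is a set $\mathcal F$ of right ideals such that (T1) $M\in\mathcal F$; (T2) $\mathfrak a\in\mathcal F$, $m\in M$ imply $(\mathfrak a:m)\in\mathcal F$; (T3) if $\mathfrak b\in\mathcal F$ and $\mathfrak a$ is a right ideal with $(\mathfrak a:b)\in\mathcal F$ for all $b\in\mathfrak b$, then $\mathfrak a\in\mathcal F$. *)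

theory Defs
  imports Main
begin

text \<open>A monoid is modelled by a type of class monoid_mult (the whole type is M).
  Right ideals may be empty.\<close>

definition right_ideal :: "'a::monoid_mult set \<Rightarrow> bool" where
  "right_ideal A \<longleftrightarrow> (\<forall>x\<in>A. \<forall>m. x * m \<in> A)"

definition two_sided_ideal :: "'a::monoid_mult set \<Rightarrow> bool" where
  "two_sided_ideal A \<longleftrightarrow> (\<forall>x\<in>A. \<forall>m. x * m \<in> A \<and> m * x \<in> A)"

definition ideal_sq :: "'a::monoid_mult set \<Rightarrow> 'a set" where
  "ideal_sq A = {x * y | x y. x \<in> A \<and> y \<in> A}"

definition ideal_colon :: "'a::monoid_mult set \<Rightarrow> 'a \<Rightarrow> 'a set" where
  "ideal_colon A m = {x. m * x \<in> A}"

definition grothendieck_topology :: "'a::monoid_mult set set \<Rightarrow> bool" where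
  "grothendieck_topology F \<longleftrightarrow>
     (\<forall>A\<in>F. right_ideal A) \<and>
     UNIV \<in> F \<and>
     (\<forall>A\<in>F. \<forall>m. ideal_colon A m \<in> F) \<and>
     (\<forall>B\<in>F. \<forall>A. right_ideal A \<and> (\<forall>b\<in>B. ideal_colon A b \<in> F) \<longrightarrow> A \<in> F)"

definition topology_of_ideal :: "'a::monoid_mult set \<Rightarrow> 'a set set" where
  "topology_of_ideal I = {A. right_ideal A \<and> I \<subseteq> A}"

end

theory Submission
  imports Defs
begin

lemma gt_T3:
  assumes "grothendieck_topology F" "B \<in> F" "right_ideal A" "\<And>b. b \<in> B \<Longrightarrow> ideal_colon A b \<in> F"
  shows "A \<in> F"
  using assms unfolding grothendieck_topology_def by blast

lemma gt_T2:
  assumes "grothendieck_topology F" "A \<in> F"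
  shows "ideal_colon A m \<in> F"
  using assms unfolding grothendieck_topology_def by blast

lemma gt_r:
  assumes "grothendieck_topology F" "A \<in> F"
  shows "right_ideal A"
  using assms unfolding grothendieck_topology_def by blast

lemma gt_U:
  assumes "grothendieck_topology F"
  shows "UNIV \<in> F"
  using assms unfolding grothendieck_topology_def by blast

lemma gt_up:
  assumes G: "grothendieck_topology F" and A: "A \<in> F" and sub: "A \<subseteq> B" and rB: "right_ideal B"
  shows "B \<in> F"
proof -
  have U: "UNIV \<in> F" using gt_U[OF G] .
  have "\<forall>b\<in>A. ideal_colon B b \<in> F"
  proof
    fix b assume "b \<in> A"
    then have "ideal_colon B b = UNIV" using sub rB unfolding ideal_colon_def right_ideal_def by blast
    then show "ideal_colon B b \<in> F" using U by simp
  qed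
  then show ?thesis using gt_T3[OF G A rB] by blast
qed

lemma gt_int:
  assumes G: "grothendieck_topology F" and A: "A \<in> F" and B: "B \<in> F"
  shows "A \<inter> B \<in> F"
proof -
  have rA: "right_ideal A" and rB: "right_ideal B" using gt_r[OF G] A B by auto
  have r: "right_ideal (A \<inter> B)" using rA rB unfolding right_ideal_def by blast
  have "\<forall>a\<in>A. ideal_colon (A \<inter> B) a \<in> F"
  proof
    fix a assume "a \<in> A"
    then have "ideal_colon (A \<inter> B) a = ideal_colon B a" using rA unfolding ideal_colon_def right_ideal_def by blast
    then show "ideal_colon (A \<inter> B) a \<in> F" using gt_T2[OF G B] by simp
  qed
  then show ?thesis using gt_T3[OF G A r] by blast
qed

lemma gt_Inter:
  assumes G: "grothendieck_topology F" and "finite S" and "S \<subseteq> F"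
  shows "\<Inter>S \<in> F"
  using assms(2,3)
proof (induction S rule: finite_induct)
  case empty then show ?case using gt_U[OF G] by simp
next
  case (insert x S) then show ?case using gt_int[OF G] by simp
qed

theorem proposition4p3:
  fixes F :: "('a::{monoid_mult, finite}) set set"
  assumes "grothendieck_topology F"
  shows "\<exists>I. two_sided_ideal I \<and> ideal_sq I = I \<and> F = topology_of_ideal I"
proof -
  note G = assms
  define m where "m = \<Inter>F"
  have mF: "m \<in> F" unfolding m_def using gt_Inter[OF G] by simp
  have rm: "right_ideal m" using gt_r[OF G mF] .
  have low: "\<And>A. A \<in> F \<Longrightarrow> m \<subseteq> A" unfolding m_def by blast
  have Feq: "F = topology_of_ideal m"
  proof
    show "F \<subseteq> topology_of_ideal m"
      using low gt_r[OF G] unfolding topology_of_ideal_def by blast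
    show "topology_of_ideal m \<subseteq> F"
    proof
      fix A assume "A \<in> topology_of_ideal m"
      then have "right_ideal A" "m \<subseteq> A" unfolding topology_of_ideal_def by auto
      then show "A \<in> F" using gt_up[OF G mF] by blast
    qed
  qed
  have two: "two_sided_ideal m"
    unfolding two_sided_ideal_def
  proof (intro ballI allI conjI)
    fix x y assume x: "x \<in> m"
    show "x * y \<in> m" using rm x unfolding right_ideal_def by blast
    have "ideal_colon m y \<in> F" using gt_T2[OF G mF] .
    then have "m \<subseteq> ideal_colon m y" by (rule low)
    then show "y * x \<in> m" using x unfolding ideal_colon_def by blast
  qed
  have sq1: "ideal_sq m \<subseteq> m" using rm unfolding ideal_sq_def right_ideal_def by blast
  have rsq: "right_ideal (ideal_sq m)"
    unfolding right_ideal_def ideal_sq_def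
  proof (intro ballI allI)
    fix z k assume "z \<in> {x * y |x y. x \<in> m \<and> y \<in> m}"
    then obtain x y where "z = x * y" "x \<in> m" "y \<in> m" by blast
    moreover have "y * k \<in> m" using rm \<open>y \<in> m\<close> unfolding right_ideal_def by blast
    moreover have "z * k = x * (y * k)" using \<open>z = x * y\<close> by (simp add: mult.assoc)
    ultimately show "z * k \<in> {x * y |x y. x \<in> m \<and> y \<in> m}" by blast
  qed
  have "\<forall>b\<in>m. ideal_colon (ideal_sq m) b \<in> F"
  proof
    fix b assume b: "b \<in> m"
    have r: "right_ideal (ideal_colon (ideal_sq m) b)"
      unfolding right_ideal_def
    proof (intro ballI allI)
      fix x k assume "x \<in> ideal_colon (ideal_sq m) b"
      then have "b * x \<in> ideal_sq m" unfolding ideal_colon_def by simp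
      then have "b * x * k \<in> ideal_sq m" using rsq unfolding right_ideal_def by blast
      then show "x * k \<in> ideal_colon (ideal_sq m) b" unfolding ideal_colon_def by (simp add: mult.assoc)
    qed
    have "m \<subseteq> ideal_colon (ideal_sq m) b"
      using b unfolding ideal_colon_def ideal_sq_def by blast
    then show "ideal_colon (ideal_sq m) b \<in> F" using gt_up[OF G mF _ r] by blast
  qed
  then have "ideal_sq m \<in> F" using gt_T3[OF G mF rsq] by blast
  then have "m \<subseteq> ideal_sq m" by (rule low)
  with sq1 have "ideal_sq m = m" by blast
  with two Feq show ?thesis by blast
qed

end
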